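(* Let $d\ge2$, $j\in[d-1]$, $R$ an abelian group, and let $\mathcal S$ be the support of a $j$-cocycle $f$ (with coefficients in $R$) in a $d$-dimensional simplicial complex $\mathcal G$. For a simplex $K$ let $\mathcal S_K$ denote the set of $j$-simplices of $\mathcal S$ contained in $K$. Then for each $k$ with $j+1\le k\le d$ and each $k$-simplex $K$ of $\mathcal G$: (i) either $\mathcal S_K=\emptyset$, or both $|\mathcal S_K|\ge k-j+1$ and $\bigcup_{\sigma\in\mathcal S_K}\sigma=K$; (ii) if $|\mathcal S_K|=k-j+1$, then $\mathcal S_K$ forms a $j$-flower in $K$.
   Context: A $j$-cochain assigns to each ordered $j$-simplex a value in $R$, changing sign under swapping two vertices; its support is the set of unordered $j$-simplices with nonzero value; it is a $j$-cocycle if $\sum_{i=0}^{j+1}(-1)^if([v_0,\dots,\hat v_i,\dots,v_{j+1}])=0_R$ for every ordered $(j+1)$-simplex $[v_0,\dots,v_{j+1}]$. $i$-simplices are members of size $i+1$; $d$-dimensional means no $(d+1)$-simplices. Given a $k$-simplex $K$ with $j\le k\le d$, a collection $\{P_0,\dots,P_{k-j}\}$ of $j$-simplices forms a $j$-flower in $K$ if $K=\bigcup_iP_i$ and there is a set $C$ with $|C|=j$ contained in every $P_i$. *)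

theory Defs
  imports Main
begin

definition simplicial_complex :: "'v set set \<Rightarrow> bool" where
  "simplicial_complex G \<longleftrightarrow>
     (\<forall>\<sigma>\<in>G. finite \<sigma> \<and> \<sigma> \<noteq> {}) \<and>
     (\<forall>\<sigma>\<in>G. \<forall>\<tau>. \<tau> \<subseteq> \<sigma> \<and> \<tau> \<noteq> {} \<longrightarrow> \<tau> \<in> G)"

definition simplex :: "'v set set \<Rightarrow> nat \<Rightarrow> 'v set \<Rightarrow> bool" where
  "simplex G i \<sigma> \<longleftrightarrow> \<sigma> \<in> G \<and> card \<sigma> = i + 1"

definition dimensional :: "'v set set \<Rightarrow> nat \<Rightarrow> bool" where
  "dimensional G d \<longleftrightarrow> \<not> (\<exists>\<sigma>. simplex G (d + 1) \<sigma>)"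

definition ordered_simplex :: "'v set set \<Rightarrow> nat \<Rightarrow> 'v list \<Rightarrow> bool" where
  "ordered_simplex G i xs \<longleftrightarrow> distinct xs \<and> length xs = i + 1 \<and> set xs \<in> G"

definition swap_pos :: "'v list \<Rightarrow> nat \<Rightarrow> nat \<Rightarrow> 'v list" where
  "swap_pos xs a b = xs[a := xs ! b, b := xs ! a]"

definition del_pos :: "'v list \<Rightarrow> nat \<Rightarrow> 'v list" where
  "del_pos xs i = take i xs @ drop (Suc i) xs"

definition cochain :: "'v set set \<Rightarrow> nat \<Rightarrow> ('v list \<Rightarrow> 'r::ab_group_add) \<Rightarrow> bool" where
  "cochain G j f \<longleftrightarrow>
     (\<forall>xs a b. ordered_simplex G j xs \<and> a < length xs \<and> b < length xs \<and> a \<noteq> b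
        \<longrightarrow> f (swap_pos xs a b) = - f xs)"

definition support :: "'v set set \<Rightarrow> nat \<Rightarrow> ('v list \<Rightarrow> 'r::ab_group_add) \<Rightarrow> 'v set set" where
  "support G j f = {set xs | xs. ordered_simplex G j xs \<and> f xs \<noteq> 0}"

definition cocycle :: "'v set set \<Rightarrow> nat \<Rightarrow> ('v list \<Rightarrow> 'r::ab_group_add) \<Rightarrow> bool" where
  "cocycle G j f \<longleftrightarrow> cochain G j f \<and>
     (\<forall>vs. ordered_simplex G (j + 1) vs \<longrightarrow>
        (\<Sum>i\<in>{0..j+1}. (if even i then f (del_pos vs i) else - f (del_pos vs i))) = 0)"

text \<open>j-flower in a k-simplex K (k = card K - 1): a collection of k-j+1 j-simplices
  whose union is K and which all contain a common j-set C.\<close>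
definition j_flower :: "nat \<Rightarrow> 'v set \<Rightarrow> 'v set set \<Rightarrow> bool" where
  "j_flower j K P \<longleftrightarrow>
     finite P \<and> card P = card K - j \<and>
     (\<forall>p\<in>P. finite p \<and> card p = j + 1) \<and>
     \<Union>P = K \<and> (\<exists>C. finite C \<and> card C = j \<and> (\<forall>p\<in>P. C \<subseteq> p))"

end

theory Submission
  imports Defs
begin

lemma del_pos_facts:
  assumes "distinct xs" "n < length xs"
  shows "set (del_pos xs n) = set xs - {xs ! n}" "distinct (del_pos xs n)"
    "length (del_pos xs n) = length xs - 1"
proof -
  have e: "xs = take n xs @ xs ! n # drop (Suc n) xs" using assms(2) by (simp add: id_take_nth_drop)
  have d: "distinct (take n xs @ xs ! n # drop (Suc n) xs)" using e assms(1) by metis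
  show "set (del_pos xs n) = set xs - {xs ! n}"
    unfolding del_pos_def using d by (subst (3) e) auto
  show "distinct (del_pos xs n)" unfolding del_pos_def using d by auto
  show "length (del_pos xs n) = length xs - 1" unfolding del_pos_def using assms(2) by simp
qed

lemma support_card:
  assumes "\<sigma> \<in> support G j f"
  shows "finite \<sigma> \<and> card \<sigma> = j + 1"
  using assms unfolding support_def ordered_simplex_def by (auto simp: distinct_card)

lemma keyL:
  assumes sc: "simplicial_complex G" and cc: "cocycle G j f" and KG: "K \<in> G"
    and s: "\<sigma> \<in> support G j f" and sK: "\<sigma> \<subseteq> K" and vK: "v \<in> K" and vs: "v \<notin> \<sigma>"
  shows "\<exists>u\<in>\<sigma>. insert v (\<sigma> - {u}) \<in> support G j f"
proof -
  obtain xs where xs: "\<sigma> = set xs" "ordered_simplex G j xs" "f xs \<noteq> 0"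
    using s unfolding support_def by auto
  have dx: "distinct xs" and lx: "length xs = j + 1" using xs(2) by (auto simp: ordered_simplex_def)
  have inG: "\<And>A. A \<subseteq> K \<Longrightarrow> A \<noteq> {} \<Longrightarrow> A \<in> G" using sc KG unfolding simplicial_complex_def by blast
  have os: "ordered_simplex G (j+1) (v # xs)"
    unfolding ordered_simplex_def using dx lx xs(1) vs sK vK inG[of "insert v \<sigma>"] by auto
  hence sum0: "(\<Sum>i\<in>{0..j+1}. (if even i then f (del_pos (v#xs) i) else - f (del_pos (v#xs) i))) = 0"
    using cc unfolding cocycle_def by blast
  have "{0..j+1} = insert 0 {1..j+1}" by auto
  hence split0: "(\<Sum>i\<in>{0..j+1}. (if even i then f (del_pos (v#xs) i) else - f (del_pos (v#xs) i)))
     = f xs + (\<Sum>i\<in>{1..j+1}. (if even i then f (del_pos (v#xs) i) else - f (del_pos (v#xs) i)))"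
    by (simp add: del_pos_def)
  have "\<exists>i\<in>{1..j+1}. f (del_pos (v#xs) i) \<noteq> 0"
  proof (rule ccontr)
    assume "\<not> ?thesis"
    then have "(\<Sum>i\<in>{1..j+1}. (if even i then f (del_pos (v#xs) i) else - f (del_pos (v#xs) i))) = 0"
      by (intro sum.neutral) auto
    then have "f xs = 0" using split0 sum0 by (metis add.right_neutral)
    with xs(3) show False by simp
  qed
  then obtain i where i: "i \<in> {1..j+1}" "f (del_pos (v#xs) i) \<noteq> 0" by blast
  have dp: "del_pos (v#xs) i = v # del_pos xs (i - 1)"
    using i(1) by (cases i) (auto simp: del_pos_def)
  have il: "i - 1 < length xs" using i(1) lx by auto
  note F = del_pos_facts[OF dx il]
  have st: "set (v # del_pos xs (i - 1)) = insert v (\<sigma> - {xs ! (i-1)})" using F(1) xs(1) by auto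
  have "ordered_simplex G j (v # del_pos xs (i - 1))"
    unfolding ordered_simplex_def using F lx vs xs(1) st inG[of "insert v (\<sigma> - {xs ! (i-1)})"] sK vK
    by auto
  hence "insert v (\<sigma> - {xs ! (i-1)}) \<in> support G j f"
    unfolding support_def using i(2) dp st by (metis (mono_tags, lifting) mem_Collect_eq)
  moreover have "xs ! (i-1) \<in> \<sigma>" using il xs(1) by auto
  ultimately show ?thesis by blast
qed

theorem lemma4p10:
  fixes G :: "'v set set" and f :: "'v list \<Rightarrow> 'r::ab_group_add"
    and d j k :: nat and K :: "'v set"
  assumes "simplicial_complex G" and "dimensional G d" and "d \<ge> 2"
    and "1 \<le> j" and "j \<le> d - 1"
    and "cocycle G j f"
    and "j + 1 \<le> k" and "k \<le> d" and "simplex G k K"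
  shows "(let SK = {\<sigma> \<in> support G j f. \<sigma> \<subseteq> K} in
           (SK = {} \<or> (card SK \<ge> k - j + 1 \<and> \<Union>SK = K)) \<and>
           (card SK = k - j + 1 \<longrightarrow> j_flower j K SK))"
proof -
  define S where "S = support G j f"
  define SK where "SK = {\<sigma> \<in> S. \<sigma> \<subseteq> K}"
  have KG: "K \<in> G" and cK: "card K = k + 1" using assms(9) by (auto simp: simplex_def)
  have fK: "finite K" using KG assms(1) unfolding simplicial_complex_def by blast
  have fSK: "finite SK" unfolding SK_def using fK
    by (rule finite_subset[rotated, OF iffD2[OF finite_Pow_iff]]) auto
  have L: "\<And>\<sigma> v. \<sigma> \<in> S \<Longrightarrow> \<sigma> \<subseteq> K \<Longrightarrow> v \<in> K \<Longrightarrow> v \<notin> \<sigma> \<Longrightarrow> \<exists>u\<in>\<sigma>. insert v (\<sigma> - {u}) \<in> S"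
    unfolding S_def using keyL[OF assms(1) assms(6) KG] by blast
  have SC: "\<And>\<sigma>. \<sigma> \<in> S \<Longrightarrow> finite \<sigma> \<and> card \<sigma> = j + 1" unfolding S_def using support_card by blast
  have main: "(SK = {} \<or> (card SK \<ge> k - j + 1 \<and> \<Union>SK = K)) \<and>
           (card SK = k - j + 1 \<longrightarrow> j_flower j K SK)"
  proof (cases "SK = {}")
    case True
    then show ?thesis by simp
  next
    case False
    then obtain \<sigma> where sS: "\<sigma> \<in> S" and sK: "\<sigma> \<subseteq> K" unfolding SK_def by auto
    have fs: "finite \<sigma>" and cs: "card \<sigma> = j + 1" using SC[OF sS] by auto
    have "\<forall>v\<in>K - \<sigma>. \<exists>u. u \<in> \<sigma> \<and> insert v (\<sigma> - {u}) \<in> S" using L[OF sS sK] by blast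
    then obtain u where u: "\<And>v. v \<in> K - \<sigma> \<Longrightarrow> u v \<in> \<sigma> \<and> insert v (\<sigma> - {u v}) \<in> S"
      by metis
    define \<tau> where "\<tau> v = insert v (\<sigma> - {u v})" for v
    have tS: "\<And>v. v \<in> K - \<sigma> \<Longrightarrow> \<tau> v \<in> SK" unfolding SK_def \<tau>_def using u sK by auto
    have mem: "\<And>v w. v \<in> K - \<sigma> \<Longrightarrow> w \<in> K - \<sigma> \<Longrightarrow> w \<in> \<tau> v \<longleftrightarrow> w = v" unfolding \<tau>_def by auto
    have inj: "inj_on \<tau> (K - \<sigma>)" unfolding inj_on_def using mem by blast
    define T where "T = insert \<sigma> (\<tau> ` (K - \<sigma>))"
    have TSK: "T \<subseteq> SK" unfolding T_def SK_def using tS sS sK by (auto simp: SK_def)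
    have snot: "\<sigma> \<notin> \<tau> ` (K - \<sigma>)" using mem by blast
    have cKs: "card (K - \<sigma>) = k - j" using card_Diff_subset[OF fs sK] cK cs by simp
    have cT: "card T = k - j + 1" unfolding T_def using snot card_image[OF inj] cKs fK by simp
    have geq: "card SK \<ge> k - j + 1" using card_mono[OF fSK TSK] cT by simp
    have UT: "\<Union>SK = K"
    proof
      show "\<Union>SK \<subseteq> K" unfolding SK_def by auto
      show "K \<subseteq> \<Union>SK"
      proof
        fix x assume "x \<in> K"
        show "x \<in> \<Union>SK"
        proof (cases "x \<in> \<sigma>")
          case True then show ?thesis using TSK unfolding T_def by auto
        next
          case False then have "x \<in> \<tau> x" "\<tau> x \<in> SK" using tS \<open>x \<in> K\<close> unfolding \<tau>_def by auto
          then show ?thesis by blast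
        qed
      qed
    qed
    have flower: "j_flower j K SK" if eq: "card SK = k - j + 1"
    proof -
      have TE: "SK = T" using card_subset_eq[OF fSK TSK] eq cT by simp
      have equ: "u v = u w" if vw: "v \<in> K - \<sigma>" "w \<in> K - \<sigma>" for v w
      proof (cases "v = w")
        case True then show ?thesis by simp
      next
        case False
        have tvS: "\<tau> v \<in> S" "\<tau> v \<subseteq> K" using tS[OF vw(1)] unfolding SK_def by auto
        have "w \<notin> \<tau> v" using mem vw False by blast
        then obtain x where x: "x \<in> \<tau> v" "insert w (\<tau> v - {x}) \<in> S"
          using L[OF tvS] vw by blast
        have "insert w (\<tau> v - {x}) \<in> SK" unfolding SK_def using x tvS vw by auto
        hence "insert w (\<tau> v - {x}) \<in> T" using TE by simp
        moreover have "insert w (\<tau> v - {x}) \<noteq> \<sigma>" using vw by auto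
        ultimately obtain z where z: "z \<in> K - \<sigma>" "insert w (\<tau> v - {x}) = \<tau> z" unfolding T_def by auto
        have "z = w" using mem[OF z(1) vw(2)] z(2) by auto
        with z have rho: "insert w (\<tau> v - {x}) = \<tau> w" by simp
        have "x = v"
        proof (rule ccontr)
          assume "x \<noteq> v"
          then have "v \<in> \<tau> w" using rho[symmetric] mem[OF vw(1) vw(1)] by auto
          then show False using mem[OF vw(2) vw(1)] False by auto
        qed
        then have "insert w (\<sigma> - {u v}) = insert w (\<sigma> - {u w})"
          using rho vw unfolding \<tau>_def by auto
        then have "insert w (\<sigma> - {u v}) - {w} = insert w (\<sigma> - {u w}) - {w}" by simp
        then have "\<sigma> - {u v} = \<sigma> - {u w}" using vw by (simp add: Diff_insert_absorb)
        then show ?thesis using u[OF vw(1)] u[OF vw(2)] by blast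
      qed
      have "K - \<sigma> \<noteq> {}"
      proof
        assume "K - \<sigma> = {}"
        then have "card (K - \<sigma>) = card ({}::'v set)" by (rule arg_cong)
        with cKs assms(7) show False by simp
      qed
      then obtain v0 where v0: "v0 \<in> K - \<sigma>" by blast
      define C where "C = \<sigma> - {u v0}"
      have "card C = j" unfolding C_def using u[OF v0] fs cs by simp
      moreover have "\<forall>p\<in>SK. C \<subseteq> p"
      proof
        fix p assume "p \<in> SK"
        then have "p \<in> T" using TE by simp
        then consider "p = \<sigma>" | v where "v \<in> K - \<sigma>" "p = \<tau> v" unfolding T_def by blast
        then show "C \<subseteq> p"
        proof cases
          case 1 then show ?thesis unfolding C_def by blast
        next
          case 2
          have "u v = u v0" using equ[OF 2(1) v0] .
          then show ?thesis unfolding 2(2) \<tau>_def C_def by blast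
        qed
      qed
      moreover have "finite C" unfolding C_def using fs by simp
      moreover have "card SK = card K - j" using eq cK assms(7) by simp
      moreover have "\<forall>p\<in>SK. finite p \<and> card p = j + 1" using SC unfolding SK_def by blast
      ultimately show ?thesis unfolding j_flower_def using fSK UT by blast
    qed
    show ?thesis using geq UT flower by blast
  qed
  then show ?thesis unfolding S_def SK_def Let_def by simp
qed

end
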